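(* For all integers $r\ge1$, $1\le l\le r$ and $0\le z\le q\le r$, $$ r\sum_{m=0}^{z}\binom{l-1}{m}\binom{r-l}{q-m-1}\;\ge\; q\sum_{m=0}^{z}\binom{l-1}{m}\binom{r-l+1}{q-m}. $$
   Context: Binomial coefficients $\binom{a}{b}$ are taken to be $0$ when $b<0$ or $b>a$. *)

theory Defs
  imports Main
begin

definition binom :: "int \<Rightarrow> int \<Rightarrow> int" where
  "binom a b = (if 0 \<le> b \<and> b \<le> a then int (nat a choose nat b) else 0)"

end

theory Submission
  imports Defs
begin

lemma nat_L1: "(n - k) * (n choose k) = Suc k * (n choose Suc k)"
proof (cases n)
  case 0 then show ?thesis by simp
next
  case (Suc m)
  then show ?thesis using binomial_absorb_comp[of n k] Suc_times_binomial[of k m] by simp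
qed

lemma binom_neg: "b < 0 \<Longrightarrow> binom a b = 0"
  by (simp add: binom_def)

lemma binom_big: "b > a \<Longrightarrow> binom a b = 0"
  by (simp add: binom_def)

lemma binom_nonneg: "binom a b \<ge> 0"
  by (simp add: binom_def)

lemma binom_nat: "binom (int n) (int k) = int (n choose k)"
  by (simp add: binom_def)

lemma L1: assumes "n \<ge> 0" "k \<ge> 0"
  shows "(n - k) * binom n k = (k + 1) * binom n (k + 1)"
proof -
  obtain N K where NK: "n = int N" "k = int K" using assms by (metis nonneg_eq_int)
  show ?thesis
  proof (cases "K \<le> N")
    case True
    have "int ((N - K) * (N choose K)) = int (Suc K * (N choose Suc K))"
      using nat_L1 by simp
    then have "(n - k) * binom n k = (k+1) * binom n (int (Suc K))"
      using True NK by (simp only: binom_nat of_nat_mult of_nat_diff) simp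
    then show ?thesis using NK by (simp add: add.commute)
  next
    case False
    then show ?thesis using NK by (simp add: binom_big)
  qed
qed

lemma L2: assumes "n \<ge> 0" "j \<ge> 0"
  shows "j * binom n j = (n - j + 1) * binom n (j - 1)"
proof (cases "j = 0")
  case True then show ?thesis by (simp add: binom_neg)
next
  case False
  have "n - (j - 1) = n - j + 1" by simp
  moreover have "(n - (j - 1)) * binom n (j - 1) = (j - 1 + 1) * binom n (j - 1 + 1)"
    using L1[of n "j - 1"] assms False by simp
  ultimately show ?thesis by (metis diff_diff_eq2 add.commute diff_add_cancel)
qed

lemma L3: assumes "n \<ge> 0" "j \<ge> 0"
  shows "binom (n + 1) j = binom n j + binom n (j - 1)"
proof -
  obtain N J where NK: "n = int N" "j = int J" using assms by (metis nonneg_eq_int)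
  show ?thesis
  proof (cases J)
    case 0 then show ?thesis using NK by (simp add: binom_def)
  next
    case (Suc I)
    have "binom (int (Suc N)) (int (Suc I)) = binom (int N) (int (Suc I)) + binom (int N) (int I)"
      by (simp only: binom_nat binomial_Suc_Suc)
    then show ?thesis using NK Suc by (simp add: add.commute)
  qed
qed

lemma closed:
  fixes a b q z :: int
  assumes a: "a \<ge> 0" and b: "b \<ge> 0" and z: "0 \<le> z" and zq: "z \<le> q"
  shows "(a + b + 1) * (\<Sum>m=0..z. binom a m * binom b (q - m - 1))
         - q * (\<Sum>m=0..z. binom a m * binom (b + 1) (q - m))
         = (a - z) * binom a z * binom b (q - z - 1)"
  using z zq
proof (induction z rule: int_ge_induct)
  case base
  have q0: "q \<ge> 0" using base by simp
  have "binom a 0 = 1" using a by (simp add: binom_def)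
  moreover have "binom (b+1) q = binom b q + binom b (q - 1)" using L3 b q0 by simp
  moreover have "q * binom b q = (b - q + 1) * binom b (q - 1)" using L2 b q0 by simp
  ultimately show ?case by (simp add: algebra_simps)
next
  case (step z)
  have zq: "z \<le> q" using step by simp
  define j where "j = q - z - 1"
  have j0: "j \<ge> 0" using step j_def by simp
  have IH: "(a + b + 1) * (\<Sum>m=0..z. binom a m * binom b (q - m - 1))
         - q * (\<Sum>m=0..z. binom a m * binom (b + 1) (q - m))
         = (a - z) * binom a z * binom b (q - z - 1)" using step zq by simp
  have set: "{0..z+1} = insert (z+1) {0..z}" using step by auto
  have e1: "(a - z) * binom a z = (z+1) * binom a (z+1)" using L1 a step by simp
  have e2: "binom (b+1) j = binom b j + binom b (j - 1)" using L3 b j0 by simp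
  have e3: "j * binom b j = (b - j + 1) * binom b (j - 1)" using L2 b j0 by simp
  have qz1: "q - (z + 1) - 1 = j - 1" "q - (z+1) = j" "q - z - 1 = j" using j_def by simp_all
  have "(a + b + 1) * (\<Sum>m=0..z+1. binom a m * binom b (q - m - 1))
         - q * (\<Sum>m=0..z+1. binom a m * binom (b + 1) (q - m))
       = (a - z) * binom a z * binom b (q - z - 1)
         + binom a (z+1) * ((a + b + 1) * binom b (q - (z+1) - 1) - q * binom (b+1) (q - (z+1)))"
    unfolding set using IH by (simp add: algebra_simps)
  also have "\<dots> = binom a (z+1) * ((z+1) * binom b j + (a + b + 1) * binom b (j - 1) - q * (binom b j + binom b (j - 1)))"
    unfolding qz1 e1 e2 by (simp add: algebra_simps)
  also have "\<dots> = binom a (z+1) * ((a - (z+1)) * binom b (j - 1) - (j * binom b j - (b - j + 1) * binom b (j - 1)))"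
  proof -
    have qe: "q = j + z + 1" using j_def by simp
    show ?thesis unfolding qe by (simp add: algebra_simps)
  qed
  also have "\<dots> = (a - (z+1)) * binom a (z+1) * binom b (q - (z+1) - 1)"
    unfolding e3 qz1 by simp
  finally show ?case .
qed

theorem lemma4p3:
  fixes r l z q :: int
  assumes "r \<ge> 1" and "1 \<le> l" and "l \<le> r" and "0 \<le> z" and "z \<le> q" and "q \<le> r"
  shows "r * (\<Sum>m=0..z. binom (l - 1) m * binom (r - l) (q - m - 1))
         \<ge> q * (\<Sum>m=0..z. binom (l - 1) m * binom (r - l + 1) (q - m))"
proof -
  have c: "((l-1) + (r-l) + 1) * (\<Sum>m=0..z. binom (l-1) m * binom (r-l) (q - m - 1))
         - q * (\<Sum>m=0..z. binom (l-1) m * binom ((r-l) + 1) (q - m))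
         = ((l-1) - z) * binom (l-1) z * binom (r-l) (q - z - 1)"
    using closed[of "l-1" "r-l" z q] assms by simp
  have "((l-1) - z) * binom (l-1) z * binom (r-l) (q - z - 1) \<ge> 0"
  proof (cases "z \<le> l - 1")
    case True then show ?thesis using binom_nonneg by simp
  next
    case False then show ?thesis by (simp add: binom_big)
  qed
  then show ?thesis using c by simp
qed

end
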